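(* Let $n\ge 2$ and $N\ge 2n+1$ be integers and let $\alpha_2,\dots,\alpha_n$ be real coupling constants. Consider the Lovelock field equations $\sum_{i=1}^{n}\alpha_i\,{}^{(i)}\mathcal{H}^{a}_{\ b}=T^{a}_{\ b}$ (with $\alpha_1=1$) for the spatially flat ($k=0$) $N$-dimensional metric $ds^2=-dt^2+a(t)^2\left(dr^2+r^2d\Omega_{N-2}^2\right)$ in vacuum ($\rho=p=0$). Then every real constant $C$ which is a root of the polynomial equation $$\frac12(N-2)(N-1)H^2-\sum_{i=2}^{n}\alpha_i\,{}^{(i)}k_{21}\,H^{2i}=0$$ gives a solution of these vacuum field equations with constant Hubble rate $H=\dot a/a=C$ (i.e. $a(t)=a_0e^{Ct}$, $a_0>0$); these are (anti-)de Sitter type solutions, and the constant $C$ depends on $N$, $n$ and the $\alpha_i$.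
   Context: Units $c=8\pi G=1$; coordinates $(t,r,\phi_1,\dots,\phi_{N-2})$, $d\Omega_{N-2}^2$ the round metric on the unit $(N-2)$-sphere. Riemann tensor convention: $R^a_{\ bcd}=\Gamma^a_{bd,c}-\Gamma^a_{bc,d}+\Gamma^a_{fc}\Gamma^f_{bd}-\Gamma^a_{fd}\Gamma^f_{bc}$. For an integer $m\ge1$ define $Q^{(m)ab}_{\ \ \ \ cd}=2^{-m}\,\delta^{a b a_2 b_2\cdots a_m b_m}_{c d c_2 d_2\cdots c_m d_m}R_{a_2b_2}^{\ \ \ c_2d_2}\cdots R_{a_mb_m}^{\ \ \ c_md_m}$ (generalized Kronecker delta; for $m=1$ this is $\tfrac12\delta^{ab}_{cd}$), the generalized Riemann tensor ${}^{(m)}\mathcal{R}_{abcd}=Q^{(m)\ \ mn}_{ab}R_{mncd}$, generalized Ricci tensor ${}^{(m)}\mathcal{R}_{ab}=g^{cd}\,{}^{(m)}\mathcal{R}_{cadb}$, scalar ${}^{(m)}\mathcal{R}=g^{ab}\,{}^{(m)}\mathcal{R}_{ab}$, and the order-$m$ Lovelock tensor ${}^{(m)}\mathcal{H}_{ab}=m\,{}^{(m)}\mathcal{R}_{ab}-\tfrac12\,{}^{(m)}\mathcal{R}\,g_{ab}$. Matter is a perfect fluid with $T^0_{\ 0}=-\rho$, $T^j_{\ j}=p$ for spatial $j$. The coefficient is ${}^{(i)}k_{21}=-\tfrac12\,(2(i-1))!\,(N-1)(N-2)\binom{N-3}{2(i-1)}$. *)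

theory Defs
  imports "HOL-Analysis.Analysis" "HOL-Combinatorics.Permutations"
begin

text \<open>Coordinates x 0 = t, x 1, ..., x (N-1) spatial; a point is a function nat => real,
  only the coordinates below N matter. A metric assigns to each point the matrix g_ab
  (indices below N; entries with an index >= N are 0).\<close>

type_synonym point = "nat \<Rightarrow> real"
type_synonym metric = "point \<Rightarrow> nat \<Rightarrow> nat \<Rightarrow> real"

definition pd :: "(point \<Rightarrow> real) \<Rightarrow> nat \<Rightarrow> point \<Rightarrow> real" where
  "pd f i x = deriv (\<lambda>s. f (x(i := s))) (x i)"

definition minv :: "nat \<Rightarrow> (nat \<Rightarrow> nat \<Rightarrow> real) \<Rightarrow> nat \<Rightarrow> nat \<Rightarrow> real" where
  "minv N M = (THE h. (\<forall>a<N. \<forall>b<N. (\<Sum>c<N. M a c * h c b) = (if a = b then 1 else 0))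
                    \<and> (\<forall>a b. \<not> (a < N \<and> b < N) \<longrightarrow> h a b = 0))"

definition ginv :: "nat \<Rightarrow> metric \<Rightarrow> point \<Rightarrow> nat \<Rightarrow> nat \<Rightarrow> real" where
  "ginv N g x = minv N (g x)"

definition christ :: "nat \<Rightarrow> metric \<Rightarrow> nat \<Rightarrow> nat \<Rightarrow> nat \<Rightarrow> point \<Rightarrow> real" where
  "christ N g a b c x = (\<Sum>d<N. ginv N g x a d *
      (pd (\<lambda>y. g y d c) b x + pd (\<lambda>y. g y d b) c x - pd (\<lambda>y. g y b c) d x)) / 2"

definition riem :: "nat \<Rightarrow> metric \<Rightarrow> nat \<Rightarrow> nat \<Rightarrow> nat \<Rightarrow> nat \<Rightarrow> point \<Rightarrow> real" where
  "riem N g a b c d x = pd (\<lambda>y. christ N g a b d y) c x - pd (\<lambda>y. christ N g a b c y) d x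
     + (\<Sum>f<N. christ N g a f c x * christ N g f b d x - christ N g a f d x * christ N g f b c x)"

definition riem_low :: "nat \<Rightarrow> metric \<Rightarrow> nat \<Rightarrow> nat \<Rightarrow> nat \<Rightarrow> nat \<Rightarrow> point \<Rightarrow> real" where
  "riem_low N g a b c d x = (\<Sum>e<N. g x a e * riem N g e b c d x)"

definition riem_ud :: "nat \<Rightarrow> metric \<Rightarrow> nat \<Rightarrow> nat \<Rightarrow> nat \<Rightarrow> nat \<Rightarrow> point \<Rightarrow> real" where
  "riem_ud N g a b c d x = (\<Sum>e<N. \<Sum>f<N. riem_low N g a b e f x * ginv N g x e c * ginv N g x f d)"

text \<open>Generalized Kronecker delta with p upper indices up 0..p-1 and p lower indices lo 0..p-1:
  the determinant of the p x p matrix of Kronecker deltas.\<close>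
definition gdelta :: "nat \<Rightarrow> (nat \<Rightarrow> nat) \<Rightarrow> (nat \<Rightarrow> nat) \<Rightarrow> real" where
  "gdelta p up lo = (\<Sum>\<sigma> | \<sigma> permutes {..<p}.
       of_int (sign \<sigma>) * (\<Prod>i<p. if up i = lo (\<sigma> i) then 1 else 0))"

definition ext2 :: "nat \<Rightarrow> nat \<Rightarrow> (nat \<Rightarrow> nat) \<Rightarrow> nat \<Rightarrow> nat" where
  "ext2 a b u = (\<lambda>i. if i = 0 then a else if i = 1 then b else u (i - 2))"

text \<open>Q^(m)ab_cd = 2^-m delta^{a b a2 b2 ... am bm}_{c d c2 d2 ... cm dm} R_{a2 b2}^{c2 d2} ... R_{am bm}^{cm dm},
  with a_{j+2} = u (2j), b_{j+2} = u (2j+1), c_{j+2} = l (2j), d_{j+2} = l (2j+1).\<close>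
definition lovQ :: "nat \<Rightarrow> metric \<Rightarrow> nat \<Rightarrow> nat \<Rightarrow> nat \<Rightarrow> nat \<Rightarrow> nat \<Rightarrow> point \<Rightarrow> real" where
  "lovQ N g m a b c d x = (1 / 2 ^ m) *
     (\<Sum>u\<in>PiE {..<2*(m-1)} (\<lambda>_. {..<N}). \<Sum>l\<in>PiE {..<2*(m-1)} (\<lambda>_. {..<N}).
        gdelta (2*m) (ext2 a b u) (ext2 c d l) *
        (\<Prod>j<m-1. riem_ud N g (u (2*j)) (u (2*j+1)) (l (2*j)) (l (2*j+1)) x))"

definition lovQ_du :: "nat \<Rightarrow> metric \<Rightarrow> nat \<Rightarrow> nat \<Rightarrow> nat \<Rightarrow> nat \<Rightarrow> nat \<Rightarrow> point \<Rightarrow> real" where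
  "lovQ_du N g m a b p q x = (\<Sum>e<N. \<Sum>f<N. \<Sum>k<N. \<Sum>l<N.
      g x a e * g x b f * lovQ N g m e f k l x * ginv N g x k p * ginv N g x l q)"

definition genRiem :: "nat \<Rightarrow> metric \<Rightarrow> nat \<Rightarrow> nat \<Rightarrow> nat \<Rightarrow> nat \<Rightarrow> nat \<Rightarrow> point \<Rightarrow> real" where
  "genRiem N g m a b c d x = (\<Sum>p<N. \<Sum>q<N. lovQ_du N g m a b p q x * riem_low N g p q c d x)"

definition genRic :: "nat \<Rightarrow> metric \<Rightarrow> nat \<Rightarrow> nat \<Rightarrow> nat \<Rightarrow> point \<Rightarrow> real" where
  "genRic N g m a b x = (\<Sum>c<N. \<Sum>d<N. ginv N g x c d * genRiem N g m c a d b x)"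

definition genScal :: "nat \<Rightarrow> metric \<Rightarrow> nat \<Rightarrow> point \<Rightarrow> real" where
  "genScal N g m x = (\<Sum>a<N. \<Sum>b<N. ginv N g x a b * genRic N g m a b x)"

definition lovH :: "nat \<Rightarrow> metric \<Rightarrow> nat \<Rightarrow> nat \<Rightarrow> nat \<Rightarrow> point \<Rightarrow> real" where
  "lovH N g m a b x = real m * genRic N g m a b x - genScal N g m x * g x a b / 2"

definition lovH_mixed :: "nat \<Rightarrow> metric \<Rightarrow> nat \<Rightarrow> nat \<Rightarrow> nat \<Rightarrow> point \<Rightarrow> real" where
  "lovH_mixed N g m a b x = (\<Sum>c<N. ginv N g x a c * lovH N g m c b x)"

text \<open>Spatially flat FRW metric -dt^2 + A(t)^2 (dx_1^2 + ... + dx_{N-1}^2)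
  (the k = 0 metric written in Cartesian spatial coordinates).\<close>
definition frw :: "nat \<Rightarrow> (real \<Rightarrow> real) \<Rightarrow> metric" where
  "frw N A x a b = (if a < N \<and> b < N \<and> a = b then (if a = 0 then -1 else (A (x 0))\<^sup>2) else 0)"

definition k21 :: "nat \<Rightarrow> nat \<Rightarrow> real" where
  "k21 N i = - (1/2) * fact (2*(i-1)) * (real N - 1) * (real N - 2)
              * real ((N - 3) choose (2*(i-1)))"

end

theory Submission
  imports Defs
begin

lemma prod_ind: "finite S \<Longrightarrow> (\<Prod>i\<in>S. if P i then 1 else 0 :: real) = (if \<forall>i\<in>S. P i then 1 else 0)"
  by (induction S rule: finite_induct) auto

lemma gdelta_alt: "gdelta p up lo = (\<Sum>\<sigma> | \<sigma> permutes {..<p}.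
       of_int (sign \<sigma>) * (if \<forall>i<p. up i = lo (\<sigma> i) then 1 else 0))"
  unfolding gdelta_def by (simp add: prod_ind Ball_def)

lemma gd_lower_perm:
  assumes t: "\<tau> permutes {..<p}"
  shows "gdelta p up (lo \<circ> \<tau>) = of_int (sign \<tau>) * gdelta p up lo"
proof -
  have pt: "permutation \<tau>" using t permutation_permutes by blast
  have "gdelta p up lo = (\<Sum>\<sigma> | \<sigma> permutes {..<p}.
       of_int (sign (\<tau> \<circ> \<sigma>)) * (\<Prod>i<p. if up i = lo ((\<tau> \<circ> \<sigma>) i) then 1 else 0))"
    unfolding gdelta_def by (rule setum_permutations_compose_left[OF t])
  also have "\<dots> = of_int (sign \<tau>) * gdelta p up (lo \<circ> \<tau>)"
    unfolding gdelta_def sum_distrib_left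
    apply (rule sum.cong, simp)
    apply (subst sign_compose[OF pt])
    using permutation_permutes apply blast
    by simp
  finally have "gdelta p up lo = of_int (sign \<tau>) * gdelta p up (lo \<circ> \<tau>)" .
  then have e2: "of_int (sign \<tau>) * gdelta p up lo = (real_of_int (sign \<tau>) * real_of_int (sign \<tau>)) * gdelta p up (lo \<circ> \<tau>)"
    by (simp only: mult.assoc)
  have ss: "real_of_int (sign \<tau>) * real_of_int (sign \<tau>) = 1" by (simp flip: of_int_mult)
  show ?thesis using e2 unfolding ss by simp
qed

lemma gd_upper_perm:
  assumes t: "\<tau> permutes {..<p}"
  shows "gdelta p (up \<circ> \<tau>) lo = of_int (sign \<tau>) * gdelta p up lo"
proof -
  have pt: "permutation \<tau>" using t permutation_permutes by blast
  have it: "inv \<tau> permutes {..<p}" using t permutes_inv by blast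
  have "gdelta p (up \<circ> \<tau>) lo = (\<Sum>\<sigma> | \<sigma> permutes {..<p}.
       of_int (sign \<sigma>) * (\<Prod>i<p. if up i = lo ((\<sigma> \<circ> inv \<tau>) i) then 1 else 0))"
    unfolding gdelta_def
  proof (rule sum.cong, simp)
    fix \<sigma> assume "\<sigma> \<in> {\<sigma>. \<sigma> permutes {..<p}}"
    have "(\<Prod>i<p. if up i = lo ((\<sigma> \<circ> inv \<tau>) i) then 1 else 0 :: real)
        = (\<Prod>i<p. (\<lambda>i. if up i = lo ((\<sigma> \<circ> inv \<tau>) i) then 1 else 0 :: real) (\<tau> i))"
      by (rule prod.permute[OF t, unfolded comp_def])
    also have "\<dots> = (\<Prod>i<p. if (up \<circ> \<tau>) i = lo (\<sigma> i) then 1 else 0)"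
      using permutes_inverses(2)[OF t] by simp
    finally show "of_int (sign \<sigma>) * (\<Prod>i<p. if (up \<circ> \<tau>) i = lo (\<sigma> i) then 1 else 0) =
         of_int (sign \<sigma>) * (\<Prod>i<p. if up i = lo ((\<sigma> \<circ> inv \<tau>) i) then 1 else 0 :: real)"
      by simp
  qed
  also have "\<dots> = (\<Sum>\<sigma> | \<sigma> permutes {..<p}.
       of_int (sign (\<sigma> \<circ> \<tau>)) * (\<Prod>i<p. if up i = lo ((\<sigma> \<circ> \<tau> \<circ> inv \<tau>) i) then 1 else 0))"
    by (rule sum_permutations_compose_right[OF t])
  also have "\<dots> = of_int (sign \<tau>) * gdelta p up lo"
    unfolding gdelta_def sum_distrib_left
    apply (rule sum.cong, simp)
    apply (subst sign_compose)
    using permutation_permutes pt apply blast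
     apply (rule pt)
    using permutes_inverses(1)[OF t] by (simp add: o_def)
  finally show ?thesis .
qed

lemma gd_rep_up:
  assumes "i < p" "j < p" "i \<noteq> j" "up i = up j"
  shows "gdelta p up lo = 0"
proof -
  have t: "Transposition.transpose i j permutes {..<p}" using assms by (simp add: permutes_swap_id)
  have "up \<circ> Transposition.transpose i j = up" using assms by (auto simp: fun_eq_iff Transposition.transpose_def)
  then have "gdelta p up lo = - gdelta p up lo"
    using gd_upper_perm[OF t, of up lo] assms by (simp add: sign_swap_id)
  then show ?thesis by simp
qed

lemma gd_rep_lo:
  assumes "i < p" "j < p" "i \<noteq> j" "lo i = lo j"
  shows "gdelta p up lo = 0"
proof -
  have t: "Transposition.transpose i j permutes {..<p}" using assms by (simp add: permutes_swap_id)
  have "lo \<circ> Transposition.transpose i j = lo" using assms by (auto simp: fun_eq_iff Transposition.transpose_def)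
  then have "gdelta p up lo = - gdelta p up lo"
    using gd_lower_perm[OF t, of up lo] assms by (simp add: sign_swap_id)
  then show ?thesis by simp
qed

lemma gd_cong_lo:
  assumes "\<And>i. i < p \<Longrightarrow> lo i = lo' i"
  shows "gdelta p up lo = gdelta p up lo'"
  unfolding gdelta_def
  apply (rule sum.cong, simp)
  apply (rule arg_cong[where f="\<lambda>x. _ * x"])
  apply (rule prod.cong, simp)
  using assms permutes_in_image by fastforce


definition D2 :: "nat \<Rightarrow> nat \<Rightarrow> nat \<Rightarrow> nat \<Rightarrow> real" where
  "D2 a b c d = (if a = c \<and> b = d then 1 else 0) - (if a = d \<and> b = c then 1 else 0)"

lemma perm_fix_claim:
  assumes s: "\<sigma> permutes {..<q+2}"
    and il: "inj_on (ext2 c d u) {..<q+2}"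
    and P: "\<forall>i<q+2. ext2 a b u i = ext2 c d u (\<sigma> i)"
  shows "\<sigma> = id \<or> \<sigma> = Transposition.transpose 0 1"
proof -
  have inj: "inj \<sigma>" using s permutes_inj by blast
  have rng: "\<And>i. i < q+2 \<Longrightarrow> \<sigma> i < q+2" using s permutes_in_image by fastforce
  have fix2: "\<sigma> i = i" if "2 \<le> i" "i < q+2" for i
  proof -
    have e1: "ext2 a b u i = ext2 c d u i" using that by (simp add: ext2_def)
    have "ext2 c d u (\<sigma> i) = ext2 c d u i" using P that e1 by auto
    then show ?thesis using il rng[OF that(2)] that(2) by (auto dest: inj_onD)
  qed
  have fixb: "\<sigma> i = i" if "\<not> i < q+2" for i using s that permutes_not_in by fastforce
  have s0: "\<sigma> 0 < 2"
  proof (rule ccontr)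
    assume "\<not> \<sigma> 0 < 2"
    then have "\<sigma> (\<sigma> 0) = \<sigma> 0" using fix2 rng by simp
    then have "\<sigma> 0 = 0" using inj by (auto dest: injD)
    then show False using \<open>\<not> \<sigma> 0 < 2\<close> by simp
  qed
  have s1: "\<sigma> 1 < 2"
  proof (rule ccontr)
    assume "\<not> \<sigma> 1 < 2"
    then have "\<sigma> (\<sigma> 1) = \<sigma> 1" using fix2 rng by simp
    then have "\<sigma> 1 = 1" using inj by (auto dest: injD)
    then show False using \<open>\<not> \<sigma> 1 < 2\<close> by simp
  qed
  have d01: "\<sigma> 0 \<noteq> \<sigma> 1" using inj by (auto dest: injD)
  have other: "\<sigma> i = i" if "i \<ge> 2" for i using fix2 fixb that by (cases "i < q+2") auto
  show ?thesis
  proof (cases "\<sigma> 0 = 0")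
    case True
    then have "\<sigma> 1 = 1" using s1 d01 by auto
    then have "\<sigma> = id" using True other
      by (auto simp: fun_eq_iff) (metis One_nat_def less_2_cases not_less)
    then show ?thesis by simp
  next
    case False
    then have "\<sigma> 0 = 1" using s0 by auto
    then have "\<sigma> 1 = 0" using s1 d01 by auto
    then have "\<sigma> = Transposition.transpose 0 1" using \<open>\<sigma> 0 = 1\<close> other
      by (auto simp: fun_eq_iff Transposition.transpose_def)
    then show ?thesis by simp
  qed
qed

lemma gd_ext2_inj:
  assumes il: "inj_on (ext2 c d u) {..<q+2}"
  shows "gdelta (q+2) (ext2 a b u) (ext2 c d u) = D2 a b c d"
proof -
  let ?P = "\<lambda>\<sigma>. \<forall>i<q+2. ext2 a b u i = ext2 c d u (\<sigma> i)"
  let ?f = "\<lambda>\<sigma>. of_int (sign \<sigma>) * (if ?P \<sigma> then 1 else 0) :: real"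
  let ?T = "Transposition.transpose (0::nat) 1"
  have T: "?T permutes {..<q+2}" by (simp add: permutes_swap_id)
  have "gdelta (q+2) (ext2 a b u) (ext2 c d u) = sum ?f {\<sigma>. \<sigma> permutes {..<q+2}}"
    by (simp add: gdelta_alt)
  also have "\<dots> = sum ?f {id, ?T}"
    apply (rule sum.mono_neutral_right)
    using T finite_permutations[of "{..<q+2}"] apply auto[2]
  proof (rule ballI)
    fix \<sigma> assume a1: "\<sigma> \<in> {\<sigma>. \<sigma> permutes {..<q+2}} - {id, ?T}"
    then have "\<not> ?P \<sigma>" using perm_fix_claim[OF _ il, of \<sigma> a b] by blast
    then show "?f \<sigma> = 0" by simp
  qed
  also have "\<dots> = ?f id + ?f ?T"
    by (subst sum.insert) (auto simp: fun_eq_iff Transposition.transpose_def)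
  finally have eq: "gdelta (q+2) (ext2 a b u) (ext2 c d u) = ?f id + ?f ?T" .
  have pid: "?P id \<longleftrightarrow> a = c \<and> b = d"
  proof
    assume h: "?P id"
    show "a = c \<and> b = d" using h[rule_format, of 0] h[rule_format, of 1] by (simp add: ext2_def)
  qed (simp add: ext2_def)
  have pT: "?P ?T \<longleftrightarrow> a = d \<and> b = c"
  proof
    assume h: "?P ?T"
    show "a = d \<and> b = c" using h[rule_format, of 0] h[rule_format, of 1] by (simp add: ext2_def)
  next
    assume "a = d \<and> b = c"
    then show "?P ?T" by (auto simp: ext2_def Transposition.transpose_def)
  qed
  show ?thesis unfolding eq using pid pT by (simp add: D2_def sign_swap_id)
qed

lemma not_inj_wit: "\<not> inj_on f S \<Longrightarrow> \<exists>i\<in>S. \<exists>j\<in>S. i \<noteq> j \<and> f i = f j"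
  unfolding inj_on_def by blast

lemma ext2_swap: "ext2 b a u = ext2 a b u \<circ> Transposition.transpose 0 1"
  by (auto simp: fun_eq_iff ext2_def Transposition.transpose_def)

lemma gd_uu:
  "gdelta (q+2) (ext2 a b u) (ext2 c d u) = (if inj_on (ext2 a b u) {..<q+2} then D2 a b c d else 0)"
proof (cases "inj_on (ext2 a b u) {..<q+2}")
  case False
  then obtain i j where ij: "i < q+2" "j < q+2" "i \<noteq> j" "ext2 a b u i = ext2 a b u j"
    using not_inj_wit by blast
  have "gdelta (q+2) (ext2 a b u) (ext2 c d u) = 0" by (rule gd_rep_up[OF ij])
  then show ?thesis using False by simp
next
  case iu: True
  show ?thesis
  proof (cases "inj_on (ext2 c d u) {..<q+2}")
    case True
    then show ?thesis using gd_ext2_inj iu by simp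
  next
    case False
    then obtain i j where ij: "i < q+2" "j < q+2" "i \<noteq> j" "ext2 c d u i = ext2 c d u j"
      using not_inj_wit by blast
    have g0: "gdelta (q+2) (ext2 a b u) (ext2 c d u) = 0" by (rule gd_rep_lo[OF ij])
    have T: "Transposition.transpose (0::nat) 1 permutes {..<q+2}" by (simp add: permutes_swap_id)
    have n1: "\<not> (a = c \<and> b = d)"
    proof
      assume "a = c \<and> b = d"
      then show False using iu False by simp
    qed
    have n2: "\<not> (a = d \<and> b = c)"
    proof
      assume "a = d \<and> b = c"
      then have "ext2 c d u = ext2 b a u" by simp
      also have "\<dots> = ext2 a b u \<circ> Transposition.transpose 0 1" by (rule ext2_swap)
      finally have "ext2 c d u = ext2 a b u \<circ> Transposition.transpose 0 1" .
      moreover have "inj_on (ext2 a b u \<circ> Transposition.transpose 0 1) {..<q+2}"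
        apply (rule comp_inj_on)
         apply (rule permutes_inj_on[OF T])
        unfolding permutes_image[OF T] by (rule iu)
      ultimately have "inj_on (ext2 c d u) {..<q+2}" by (simp only:)
      then show False using False by contradiction
    qed
    have "D2 a b c d = 0" unfolding D2_def if_not_P[OF n1] if_not_P[OF n2] by simp
    then show ?thesis using g0 iu by simp
  qed
qed

definition sw :: "nat set \<Rightarrow> nat \<Rightarrow> nat" where
  "sw s i = (if i div 2 \<in> s then (if even i then Suc i else i - 1) else i)"

lemma sw_empty: "sw {} = id" by (simp add: fun_eq_iff sw_def)


lemma sw_insert: "j \<notin> s \<Longrightarrow> sw (insert j s) = sw s \<circ> Transposition.transpose (2*j) (2*j+1)"
proof (rule ext)
  fix i assume j: "j \<notin> s"
  show "sw (insert j s) i = (sw s \<circ> Transposition.transpose (2*j) (2*j+1)) i"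
  proof (cases "i = 2*j \<or> i = 2*j+1")
    case True
    then show ?thesis using j by (auto simp: sw_def Transposition.transpose_def)
  next
    case False
    then have "i div 2 \<noteq> j" by presburger
    then show ?thesis using False by (auto simp: sw_def Transposition.transpose_def)
  qed
qed
lemma sw_range:
  assumes "s \<subseteq> {..<k}" "i < 2*k" shows "sw s i < 2*k"
proof (cases "i div 2 \<in> s")
  case True
  then have h: "i div 2 < k" using assms by auto
  have "Suc i < 2*k" if "even i" using h that by presburger
  then show ?thesis unfolding sw_def using True assms(2) by auto
next
  case False
  then show ?thesis unfolding sw_def using assms(2) by auto
qed

lemma ext2_comp_T: "ext2 c d (l \<circ> Transposition.transpose (2*j) (2*j+1))
   = ext2 c d l \<circ> Transposition.transpose (2*j+2) (2*j+3)"
proof (rule ext)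
  fix i show "ext2 c d (l \<circ> Transposition.transpose (2*j) (2*j+1)) i
   = (ext2 c d l \<circ> Transposition.transpose (2*j+2) (2*j+3)) i"
  proof (cases "i < 2")
    case True then show ?thesis by (auto simp: ext2_def Transposition.transpose_def)
  next
    case False
    then have "i - 2 = 2*j \<longleftrightarrow> i = 2*j+2" "i - 2 = 2*j+1 \<longleftrightarrow> i = 2*j+3" by auto
    then show ?thesis using False by (auto simp: ext2_def Transposition.transpose_def)
  qed
qed
lemma G_sw:
  assumes "finite s" "s \<subseteq> {..<k}"
  shows "gdelta (2*k+2) up (ext2 c d (l \<circ> sw s)) = (-1)^card s * gdelta (2*k+2) up (ext2 c d l)"
  using assms
proof (induction s rule: finite_induct)
  case empty
  then show ?case by (simp add: sw_empty)
next
  case (insert j s)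
  have jk: "j < k" using insert by auto
  have T: "Transposition.transpose (2*j+2) (2*j+3) permutes {..<2*k+2}"
    using jk by (intro permutes_swap_id) auto
  have "l \<circ> sw (insert j s) = (l \<circ> sw s) \<circ> Transposition.transpose (2*j) (2*j+1)"
    using sw_insert[OF insert(2)] by (simp add: comp_assoc)
  then have "gdelta (2*k+2) up (ext2 c d (l \<circ> sw (insert j s)))
      = gdelta (2*k+2) up (ext2 c d (l \<circ> sw s) \<circ> Transposition.transpose (2*j+2) (2*j+3))"
    by (simp only: ext2_comp_T)
  also have "\<dots> = - gdelta (2*k+2) up (ext2 c d (l \<circ> sw s))"
    using gd_lower_perm[OF T] by (simp add: sign_swap_id)
  also have "\<dots> = (-1)^card (insert j s) * gdelta (2*k+2) up (ext2 c d l)"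
    using insert by (simp add: o_def)
  finally show ?case .
qed


lemma pair_ind:
  assumes s: "s \<subseteq> {..<k}"
  shows "(\<Prod>j\<in>s. - (if u(2*j) = l(2*j+1) \<and> u(2*j+1) = l(2*j) then 1 else 0::real))
       * (\<Prod>j\<in>{..<k}-s. (if u(2*j) = l(2*j) \<and> u(2*j+1) = l(2*j+1) then 1 else 0))
     = (-1)^card s * (if \<forall>i<2*k. l i = u (sw s i) then 1 else 0)"
proof -
  have fs: "finite s" using s finite_subset by blast
  have m: "(\<Prod>j\<in>s. - (if u(2*j) = l(2*j+1) \<and> u(2*j+1) = l(2*j) then 1 else 0::real))
     = (-1)^card s * (\<Prod>j\<in>s. (if u(2*j) = l(2*j+1) \<and> u(2*j+1) = l(2*j) then 1 else 0::real))"
    using fs by (induction s rule: finite_induct) auto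
  have eqv: "((\<forall>j\<in>s. u(2*j) = l(2*j+1) \<and> u(2*j+1) = l(2*j)) \<and>
              (\<forall>j\<in>{..<k}-s. u(2*j) = l(2*j) \<and> u(2*j+1) = l(2*j+1)))
          \<longleftrightarrow> (\<forall>i<2*k. l i = u (sw s i))"
  proof
    assume h: "(\<forall>j\<in>s. u(2*j) = l(2*j+1) \<and> u(2*j+1) = l(2*j)) \<and>
              (\<forall>j\<in>{..<k}-s. u(2*j) = l(2*j) \<and> u(2*j+1) = l(2*j+1))"
    show "\<forall>i<2*k. l i = u (sw s i)"
    proof (intro allI impI)
      fix i assume i: "i < 2*k"
      define j where "j = i div 2"
      have jk: "j < k" using i unfolding j_def by auto
      have ij: "i = 2*j \<or> i = 2*j+1" unfolding j_def by auto
      show "l i = u (sw s i)"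
      proof (cases "j \<in> s")
        case True
        then show ?thesis using h ij unfolding sw_def j_def[symmetric] by auto
      next
        case False
        then show ?thesis using h ij jk unfolding sw_def j_def[symmetric] by auto
      qed
    qed
  next
    assume h: "\<forall>i<2*k. l i = u (sw s i)"
    have a: "j \<in> s \<Longrightarrow> u(2*j) = l(2*j+1) \<and> u(2*j+1) = l(2*j)" for j
      using h[rule_format, of "2*j"] h[rule_format, of "2*j+1"] s by (auto simp: sw_def)
    have b: "j \<in> {..<k}-s \<Longrightarrow> u(2*j) = l(2*j) \<and> u(2*j+1) = l(2*j+1)" for j
      using h[rule_format, of "2*j"] h[rule_format, of "2*j+1"] s by (auto simp: sw_def)
    show "(\<forall>j\<in>s. u(2*j) = l(2*j+1) \<and> u(2*j+1) = l(2*j)) \<and>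
              (\<forall>j\<in>{..<k}-s. u(2*j) = l(2*j) \<and> u(2*j+1) = l(2*j+1))"
      using a b by blast
  qed
  have p1: "(\<Prod>j\<in>s. (if u(2*j) = l(2*j+1) \<and> u(2*j+1) = l(2*j) then 1 else 0::real))
     = (if \<forall>j\<in>s. u(2*j) = l(2*j+1) \<and> u(2*j+1) = l(2*j) then 1 else 0)"
    by (rule prod_ind[OF fs])
  have p2: "(\<Prod>j\<in>{..<k}-s. (if u(2*j) = l(2*j) \<and> u(2*j+1) = l(2*j+1) then 1 else 0::real))
     = (if \<forall>j\<in>{..<k}-s. u(2*j) = l(2*j) \<and> u(2*j+1) = l(2*j+1) then 1 else 0)"
    by (rule prod_ind) simp
  have im: "\<And>P Q. (if P then 1 else 0::real) * (if Q then 1 else 0) = (if P \<and> Q then 1 else 0)" by simp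
  show ?thesis unfolding m p1 p2 mult.assoc im eqv ..
qed

lemma pair_sum:
  fixes G :: "(nat \<Rightarrow> nat) \<Rightarrow> real"
  assumes u: "u \<in> {..<2*k} \<rightarrow>\<^sub>E {..<N}"
   and Gs: "\<And>l s. s \<subseteq> {..<k} \<Longrightarrow> G (l \<circ> sw s) = (-1)^card s * G l"
   and Gc: "\<And>l l'. (\<And>i. i < 2*k \<Longrightarrow> l i = l' i) \<Longrightarrow> G l = G l'"
  shows "(\<Sum>l\<in>{..<2*k} \<rightarrow>\<^sub>E {..<N}. G l * (\<Prod>j<k. D2 (u(2*j)) (u(2*j+1)) (l(2*j)) (l(2*j+1))))
       = 2^k * G u"
proof -
  let ?I = "\<lambda>s l. (if \<forall>i<2*k. l i = u (sw s i) then 1 else 0::real)"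
  have pe: "(\<Prod>j<k. D2 (u(2*j)) (u(2*j+1)) (l(2*j)) (l(2*j+1)))
        = (\<Sum>s\<in>Pow {..<k}. (-1)^card s * ?I s l)" for l
  proof -
    have "(\<Prod>j<k. D2 (u(2*j)) (u(2*j+1)) (l(2*j)) (l(2*j+1)))
       = (\<Prod>j<k. (- (if u(2*j) = l(2*j+1) \<and> u(2*j+1) = l(2*j) then 1 else 0::real))
                 + (if u(2*j) = l(2*j) \<and> u(2*j+1) = l(2*j+1) then 1 else 0))"
      by (rule prod.cong) (auto simp: D2_def)
    also have "\<dots> = (\<Sum>s\<in>Pow {..<k}. (\<Prod>j\<in>s. - (if u(2*j) = l(2*j+1) \<and> u(2*j+1) = l(2*j) then 1 else 0::real))
       * (\<Prod>j\<in>{..<k}-s. (if u(2*j) = l(2*j) \<and> u(2*j+1) = l(2*j+1) then 1 else 0)))"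
      by (rule prod_add) simp
    also have "\<dots> = (\<Sum>s\<in>Pow {..<k}. (-1)^card s * ?I s l)"
      apply (rule sum.cong, rule refl)
      apply (rule pair_ind) by simp
    finally show ?thesis .
  qed
  have inner: "(\<Sum>l\<in>{..<2*k} \<rightarrow>\<^sub>E {..<N}. G l * ?I s l) = (-1)^card s * G u"
    if s: "s \<subseteq> {..<k}" for s
  proof -
    define l0 where "l0 = restrict (u \<circ> sw s) {..<2*k}"
    have l0P: "l0 \<in> {..<2*k} \<rightarrow>\<^sub>E {..<N}"
      unfolding l0_def using u sw_range[OF s] by (auto simp: PiE_iff)
    have "(\<Sum>l\<in>{..<2*k} \<rightarrow>\<^sub>E {..<N}. G l * ?I s l)
        = (\<Sum>l\<in>{..<2*k} \<rightarrow>\<^sub>E {..<N}. if l = l0 then G l else 0)"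
    proof (rule sum.cong, simp)
      fix l assume l: "l \<in> {..<2*k} \<rightarrow>\<^sub>E {..<N}"
      have "(\<forall>i<2*k. l i = u (sw s i)) \<longleftrightarrow> l = l0"
      proof
        assume "\<forall>i<2*k. l i = u (sw s i)"
        then show "l = l0" using l l0P by (intro PiE_ext[OF l l0P]) (auto simp: l0_def)
      qed (auto simp: l0_def)
      then show "G l * ?I s l = (if l = l0 then G l else 0)" by simp
    qed
    also have "\<dots> = G l0" using l0P by (subst sum.delta) (auto intro: finite_PiE)
    also have "\<dots> = G (u \<circ> sw s)" by (rule Gc) (simp add: l0_def)
    also have "\<dots> = (-1)^card s * G u" by (rule Gs[OF s])
    finally show ?thesis .
  qed
  have "(\<Sum>l\<in>{..<2*k} \<rightarrow>\<^sub>E {..<N}. G l * (\<Prod>j<k. D2 (u(2*j)) (u(2*j+1)) (l(2*j)) (l(2*j+1))))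
      = (\<Sum>l\<in>{..<2*k} \<rightarrow>\<^sub>E {..<N}. \<Sum>s\<in>Pow {..<k}. (-1)^card s * (G l * ?I s l))"
    unfolding pe sum_distrib_left by (simp add: algebra_simps)
  also have "\<dots> = (\<Sum>s\<in>Pow {..<k}. (-1)^card s * (\<Sum>l\<in>{..<2*k} \<rightarrow>\<^sub>E {..<N}. G l * ?I s l))"
    by (subst sum.swap) (simp add: sum_distrib_left)
  also have "\<dots> = (\<Sum>s\<in>Pow {..<k}. G u)"
    by (rule sum.cong) (auto simp: inner)
  also have "\<dots> = 2^k * G u" by (simp add: card_Pow)
  finally show ?thesis .
qed


lemma inj_ext2_iff:
  "inj_on (ext2 a b u) {..<q+2} \<longleftrightarrow> a \<noteq> b \<and> (\<forall>i<q. u i \<noteq> a \<and> u i \<noteq> b) \<and> inj_on u {..<q}"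
proof
  assume h: "inj_on (ext2 a b u) {..<q+2}"
  have ab: "a \<noteq> b" using inj_onD[OF h, of 0 1] by (auto simp: ext2_def)
  have ua: "u i \<noteq> a \<and> u i \<noteq> b" if "i < q" for i
    using inj_onD[OF h, of "i+2" 0] inj_onD[OF h, of "i+2" 1] that by (auto simp: ext2_def)
  have iu: "inj_on u {..<q}"
  proof (rule inj_onI)
    fix x y assume "x \<in> {..<q}" "y \<in> {..<q}" "u x = u y"
    then show "x = y" using inj_onD[OF h, of "x+2" "y+2"] by (auto simp: ext2_def)
  qed
  show "a \<noteq> b \<and> (\<forall>i<q. u i \<noteq> a \<and> u i \<noteq> b) \<and> inj_on u {..<q}" using ab ua iu by blast
next
  assume h: "a \<noteq> b \<and> (\<forall>i<q. u i \<noteq> a \<and> u i \<noteq> b) \<and> inj_on u {..<q}"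
  show "inj_on (ext2 a b u) {..<q+2}"
  proof (rule inj_onI)
    fix x y assume x: "x \<in> {..<q+2}" and y: "y \<in> {..<q+2}" and e: "ext2 a b u x = ext2 a b u y"
    show "x = y"
    proof (cases "x < 2")
      case True
      show ?thesis
      proof (cases "y < 2")
        case True
        then show ?thesis using \<open>x < 2\<close> e h by (auto simp: ext2_def split: if_splits)
      next
        case False
        then have "y - 2 < q" using y by auto
        then show ?thesis using \<open>x < 2\<close> False e h by (auto simp: ext2_def split: if_splits)
      qed
    next
      case False
      then have xq: "x - 2 < q" using x by auto
      show ?thesis
      proof (cases "y < 2")
        case True
        then show ?thesis using xq False e h by (auto simp: ext2_def split: if_splits)
      next
        case yF: False
        then have "y - 2 < q" using y by auto
        then have "x - 2 = y - 2" using xq False yF e h by (auto simp: ext2_def inj_on_def)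
        then show ?thesis using False yF by simp
      qed
    qed
  qed
qed

lemma card_inj_ext2:
  assumes "a < N" "b < N" "a \<noteq> b"
  shows "card {u \<in> {..<q} \<rightarrow>\<^sub>E {..<N}. inj_on (ext2 a b u) {..<q+2}} = (\<Prod>i<q. N - 2 - i)"
proof -
  have "{u \<in> {..<q} \<rightarrow>\<^sub>E {..<N}. inj_on (ext2 a b u) {..<q+2}} = {u \<in> {..<q} \<rightarrow>\<^sub>E ({..<N} - {a,b}). inj_on u {..<q}}"
    apply (simp only: inj_ext2_iff) using assms by (auto simp: PiE_iff)
  moreover have "card ({..<N} - {a,b}) = N - 2" using assms by (simp add: card_Diff_subset)
  ultimately show ?thesis
    using card_inj_on_subset_funcset[of "{..<q}" "{..<N} - {a,b}" "{..<q}"]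
    by (simp add: atLeast0LessThan)
qed

lemma lovQ_eval:
  assumes R: "\<And>a b c d. a < N \<Longrightarrow> b < N \<Longrightarrow> c < N \<Longrightarrow> d < N \<Longrightarrow> riem_ud N g a b c d x = K * D2 a b c d"
    and abcd: "a < N" "b < N"
  shows "lovQ N g (Suc k) a b c d x = (1/2) * K^k * real (\<Prod>i<2*k. N - 2 - i) * D2 a b c d"
proof -
  let ?P = "{..<2*k} \<rightarrow>\<^sub>E {..<N}"
  let ?G = "\<lambda>u l. gdelta (2*k+2) (ext2 a b u) (ext2 c d l)"
  have inner: "(\<Sum>l\<in>?P. ?G u l * (\<Prod>j<k. riem_ud N g (u (2*j)) (u (2*j+1)) (l (2*j)) (l (2*j+1)) x))
     = K^k * 2^k * ?G u u" if u: "u \<in> ?P" for u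
  proof -
    have "(\<Sum>l\<in>?P. ?G u l * (\<Prod>j<k. riem_ud N g (u (2*j)) (u (2*j+1)) (l (2*j)) (l (2*j+1)) x))
       = (\<Sum>l\<in>?P. K^k * (?G u l * (\<Prod>j<k. D2 (u (2*j)) (u (2*j+1)) (l (2*j)) (l (2*j+1)))))"
    proof (rule sum.cong, simp)
      fix l assume l: "l \<in> ?P"
      have "(\<Prod>j<k. riem_ud N g (u (2*j)) (u (2*j+1)) (l (2*j)) (l (2*j+1)) x)
          = (\<Prod>j<k. K * D2 (u (2*j)) (u (2*j+1)) (l (2*j)) (l (2*j+1)))"
      proof (rule prod.cong, simp)
        fix j assume "j \<in> {..<k}"
        then have "2*j < 2*k" "2*j+1 < 2*k" by auto
        then show "riem_ud N g (u (2*j)) (u (2*j+1)) (l (2*j)) (l (2*j+1)) x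
            = K * D2 (u (2*j)) (u (2*j+1)) (l (2*j)) (l (2*j+1))"
          using u l by (intro R) (auto simp: PiE_iff)
      qed
      also have "\<dots> = K^k * (\<Prod>j<k. D2 (u (2*j)) (u (2*j+1)) (l (2*j)) (l (2*j+1)))"
        by (simp add: prod.distrib)
      finally show "?G u l * (\<Prod>j<k. riem_ud N g (u (2*j)) (u (2*j+1)) (l (2*j)) (l (2*j+1)) x)
         = K^k * (?G u l * (\<Prod>j<k. D2 (u (2*j)) (u (2*j+1)) (l (2*j)) (l (2*j+1))))" by simp
    qed
    also have "\<dots> = K^k * (\<Sum>l\<in>?P. ?G u l * (\<Prod>j<k. D2 (u (2*j)) (u (2*j+1)) (l (2*j)) (l (2*j+1))))"
      by (simp add: sum_distrib_left)
    also have "(\<Sum>l\<in>?P. ?G u l * (\<Prod>j<k. D2 (u (2*j)) (u (2*j+1)) (l (2*j)) (l (2*j+1)))) = 2^k * ?G u u"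
    proof (rule pair_sum[OF u])
      fix l s assume "s \<subseteq> {..<k}"
      then show "?G u (l \<circ> sw s) = (-1)^card s * ?G u l"
        using G_sw finite_subset by blast
    next
      fix l l' :: "nat \<Rightarrow> nat" assume h: "\<And>i. i < 2*k \<Longrightarrow> l i = l' i"
      show "?G u l = ?G u l'"
        by (rule gd_cong_lo) (auto simp: ext2_def h)
    qed
    finally show ?thesis by simp
  qed
  have e1: "2 * Suc k = 2*k+2" "Suc k - 1 = k" by simp_all
  have "lovQ N g (Suc k) a b c d x = (1 / 2 ^ Suc k) * (\<Sum>u\<in>?P. \<Sum>l\<in>?P. ?G u l * (\<Prod>j<k. riem_ud N g (u (2*j)) (u (2*j+1)) (l (2*j)) (l (2*j+1)) x))"
    unfolding lovQ_def e1 ..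
  also have "\<dots> = (1 / 2 ^ Suc k) * (\<Sum>u\<in>?P. K^k * 2^k * ?G u u)"
    by (rule arg_cong[where f="\<lambda>x. _ * x"], rule sum.cong[OF refl], rule inner)
  also have "(\<Sum>u\<in>?P. K^k * 2^k * ?G u u) = K^k * 2^k * (\<Sum>u\<in>?P. (if inj_on (ext2 a b u) {..<2*k+2} then D2 a b c d else 0))"
    unfolding sum_distrib_left gd_uu ..
  also have "(\<Sum>u\<in>?P. (if inj_on (ext2 a b u) {..<2*k+2} then D2 a b c d else 0))
     = real (card {u \<in> ?P. inj_on (ext2 a b u) {..<2*k+2}}) * D2 a b c d"
    by (subst sum.inter_filter[symmetric]) (auto simp: finite_PiE)
  also have "real (card {u \<in> ?P. inj_on (ext2 a b u) {..<2*k+2}}) * D2 a b c d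
     = real (\<Prod>i<2*k. N - 2 - i) * D2 a b c d"
  proof (cases "a = b")
    case True then show ?thesis by (simp add: D2_def)
  next
    case False then show ?thesis using card_inj_ext2[OF abcd False, of "2*k"] by simp
  qed
  finally have fin: "lovQ N g (Suc k) a b c d x
     = 1 / 2 ^ Suc k * (K ^ k * 2 ^ k * (real (\<Prod>i<2*k. N - 2 - i) * D2 a b c d))" .
  have aux: "\<And>X::real. (1 / 2 ^ Suc k) * (K^k * (2^k * X)) = 1/2 * (K^k * X)"
    by (simp add: power_Suc)
  show ?thesis using fin by (simp only: aux mult.assoc)
qed

lemma pd_time: "pd (\<lambda>y. F (y 0)) i x = (if i = 0 then deriv F (x 0) else 0)"
  unfolding pd_def by auto

context
  fixes a0 C :: real and N :: nat
  assumes a0: "a0 > 0"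
begin

definition "AS t = (a0 * exp (C * t))^2"

lemma AS_pos: "AS t > 0" using a0 by (simp add: AS_def)

lemma AS_has_deriv: "(AS has_real_derivative 2 * C * AS t) (at t)"
    unfolding AS_def
    by (auto intro!: derivative_eq_intros simp: power2_eq_square algebra_simps)

lemma AS_deriv: "deriv AS t = 2 * C * AS t"
  using AS_has_deriv by (rule DERIV_imp_deriv)

abbreviation "g \<equiv> frw N (\<lambda>t. a0 * exp (C * t))"

definition "gF a b t = (if a < N \<and> b < N \<and> a = b then (if a = 0 then -1 else AS t) else 0)"

lemma g_eq: "g y a b = gF a b (y 0)"
  by (simp add: frw_def gF_def AS_def)

lemma pd_g: "pd (\<lambda>y. g y a b) i x = (if i = 0 \<and> a < N \<and> b < N \<and> a = b \<and> a \<noteq> 0 then 2 * C * AS (x 0) else 0)"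
proof -
  have "pd (\<lambda>y. g y a b) i x = pd (\<lambda>y. gF a b (y 0)) i x" by (simp add: g_eq)
  also have "\<dots> = (if i = 0 then deriv (gF a b) (x 0) else 0)" by (rule pd_time)
  also have "deriv (gF a b) (x 0) = (if a < N \<and> b < N \<and> a = b \<and> a \<noteq> 0 then 2 * C * AS (x 0) else 0)"
  proof (cases "a < N \<and> b < N \<and> a = b \<and> a \<noteq> 0")
    case True
    then have "gF a b = AS" by (auto simp: gF_def fun_eq_iff)
    then show ?thesis using True AS_deriv by simp
  next
    case False
    then have "gF a b = (\<lambda>_. if a < N \<and> b < N \<and> a = b then -1 else 0)" by (auto simp: gF_def fun_eq_iff)
    then show ?thesis using False by auto
  qed
  finally show ?thesis by simp
qed

definition "giF a b t = (if a < N \<and> b < N \<and> a = b then (if a = 0 then -1 else 1 / AS t) else 0)"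

lemma ginv_eq: "ginv N g y a b = giF a b (y 0)"
proof -
  let ?M = "g y" and ?h = "\<lambda>a b. giF a b (y 0)"
  have Msum: "(\<Sum>c<N. ?M a c * h c b) = (if a = 0 then - h a b else AS (y 0) * h a b)"
    if "a < N" for a h b
  proof -
    have "(\<Sum>c<N. ?M a c * h c b) = (\<Sum>c<N. if c = a then gF a a (y 0) * h a b else 0)"
      by (rule sum.cong) (auto simp: g_eq gF_def)
    also have "\<dots> = gF a a (y 0) * h a b" using that by (simp add: sum.delta)
    finally show ?thesis using that by (simp add: gF_def)
  qed
  have P: "(\<forall>a<N. \<forall>b<N. (\<Sum>c<N. ?M a c * ?h c b) = (if a = b then 1 else 0))
                    \<and> (\<forall>a b. \<not> (a < N \<and> b < N) \<longrightarrow> ?h a b = 0)"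
  proof (intro conjI allI impI)
    fix a b assume a: "a < N" and b: "b < N"
    show "(\<Sum>c<N. ?M a c * ?h c b) = (if a = b then 1 else 0)"
      unfolding Msum[of a "\<lambda>c b. giF c b (y 0)" b, OF a] using AS_pos[of "y 0"] a b by (auto simp: giF_def)
  next
    fix a b assume "\<not> (a < N \<and> b < N)"
    then show "?h a b = 0" by (auto simp: giF_def)
  qed
  have U: "h = ?h" if "(\<forall>a<N. \<forall>b<N. (\<Sum>c<N. ?M a c * h c b) = (if a = b then 1 else 0))
                    \<and> (\<forall>a b. \<not> (a < N \<and> b < N) \<longrightarrow> h a b = 0)" for h
  proof (intro ext)
    fix a b
    show "h a b = ?h a b"
    proof (cases "a < N \<and> b < N")
      case True
      then have "(\<Sum>c<N. ?M a c * h c b) = (if a = b then 1 else 0)" using that by blast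
      then have "(if a = 0 then - h a b else AS (y 0) * h a b) = (if a = b then 1 else 0)"
        unfolding Msum[of a h b, OF conjunct1[OF True]] .
      then show ?thesis using True AS_pos[of "y 0"] by (auto simp: giF_def field_simps split: if_splits)
    next
      case False
      then show ?thesis using that by (auto simp: giF_def)
    qed
  qed
  have "minv N ?M = ?h" unfolding minv_def
    by (rule the_equality, rule P, rule U, assumption)
  then show ?thesis unfolding ginv_def by simp
qed


definition "GF a b c t = (if a = 0 then (if b = c \<and> b \<noteq> 0 then C * AS t else 0)
   else (if b = 0 \<and> c = a then C else 0) + (if c = 0 \<and> b = a then C else 0))"

lemma christ_eq:
  assumes "a < N" "b < N" "c < N"
  shows "christ N g a b c y = GF a b c (y 0)"
proof -
  let ?T = "\<lambda>d. pd (\<lambda>y. g y d c) b y + pd (\<lambda>y. g y d b) c y - pd (\<lambda>y. g y b c) d y"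
  have "christ N g a b c y = (\<Sum>d<N. if d = a then giF a a (y 0) * ?T d else 0) / 2"
    unfolding christ_def by (rule arg_cong[where f="\<lambda>x. x / 2"], rule sum.cong) (auto simp: ginv_eq giF_def)
  also have "\<dots> = giF a a (y 0) * ?T a / 2" using assms by (simp add: sum.delta)
  also have "\<dots> = GF a b c (y 0)"
    using assms AS_pos[of "y 0"] unfolding pd_g giF_def GF_def by (auto simp: field_simps)
  finally show ?thesis .
qed

lemma dGF: "deriv (GF a b c) t = (if a = 0 \<and> b = c \<and> b \<noteq> 0 then 2 * C * C * AS t else 0)"
proof (cases "a = 0 \<and> b = c \<and> b \<noteq> 0")
  case True
  then have e: "GF a b c = (\<lambda>t. C * AS t)" by (auto simp: GF_def fun_eq_iff)
  have "((\<lambda>t. C * AS t) has_real_derivative C * (2 * C * AS t)) (at t)"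
    by (rule DERIV_cmult[OF AS_has_deriv])
  then have "deriv (GF a b c) t = C * (2 * C * AS t)" unfolding e by (rule DERIV_imp_deriv)
  then show ?thesis unfolding if_P[OF True] by simp
next
  case False
  then have "GF a b c = (\<lambda>t. if a = 0 then 0 else (if b = 0 \<and> c = a then C else 0) + (if c = 0 \<and> b = a then C else 0))"
    by (auto simp: GF_def fun_eq_iff)
  then show ?thesis unfolding if_not_P[OF False] by simp
qed

lemma pd_christ:
  assumes "a < N" "b < N" "d < N"
  shows "pd (\<lambda>y. christ N g a b d y) c x = (if c = 0 \<and> a = 0 \<and> b = d \<and> b \<noteq> 0 then 2 * C * C * AS (x 0) else 0)"
proof -
  have "(\<lambda>y. christ N g a b d y) = (\<lambda>y. GF a b d (y 0))" using christ_eq assms by auto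
  then have "pd (\<lambda>y. christ N g a b d y) c x = pd (\<lambda>y. GF a b d (y 0)) c x" by simp
  also have "\<dots> = (if c = 0 then deriv (GF a b d) (x 0) else 0)" by (rule pd_time)
  finally show ?thesis by (simp add: dGF)
qed

lemma GS:
  assumes "a < N" "c < N"
  shows "(\<Sum>f<N. GF a f c t * X f) = (if a = 0 then (if c \<noteq> 0 then C * AS t * X c else 0)
      else (if c = a then C * X 0 else 0) + (if c = 0 then C * X a else 0))"
proof (cases "a = 0")
  case True
  have "(\<Sum>f<N. GF a f c t * X f) = (\<Sum>f<N. if f = c then (if c \<noteq> 0 then C * AS t * X c else 0) else 0)"
    by (rule sum.cong) (auto simp: GF_def True)
  also have "\<dots> = (if c \<noteq> 0 then C * AS t * X c else 0)" using assms by (simp add: sum.delta)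
  finally show ?thesis using True by simp
next
  case False
  have "(\<Sum>f<N. GF a f c t * X f) = (\<Sum>f<N. (if f = 0 then (if c = a then C * X 0 else 0) else 0)
      + (if f = a then (if c = 0 then C * X a else 0) else 0))"
    by (rule sum.cong) (auto simp: GF_def False algebra_simps)
  also have "\<dots> = (if c = a then C * X 0 else 0) + (if c = 0 then C * X a else 0)"
    using assms by (simp add: sum.distrib sum.delta)
  finally show ?thesis using False by simp
qed


lemma riem_eq:
  assumes a: "a < N" and b: "b < N" and c: "c < N" and d: "d < N"
  shows "riem N g a b c d x = C^2 * ((if a = c then gF b d (x 0) else 0) - (if a = d then gF b c (x 0) else 0))"
proof -
  let ?t = "x 0"
  have S: "(\<Sum>f<N. christ N g a f c x * christ N g f b d x - christ N g a f d x * christ N g f b c x)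
     = (\<Sum>f<N. GF a f c ?t * GF f b d ?t) - (\<Sum>f<N. GF a f d ?t * GF f b c ?t)"
    unfolding sum_subtractf[symmetric] by (rule sum.cong) (auto simp: christ_eq a b c d)
  have r: "riem N g a b c d x = (if c = 0 \<and> a = 0 \<and> b = d \<and> b \<noteq> 0 then 2 * C * C * AS ?t else 0)
     - (if d = 0 \<and> a = 0 \<and> b = c \<and> b \<noteq> 0 then 2 * C * C * AS ?t else 0)
     + ((if a = 0 then (if c \<noteq> 0 then C * AS ?t * GF c b d ?t else 0)
      else (if c = a then C * GF 0 b d ?t else 0) + (if c = 0 then C * GF a b d ?t else 0))
     - (if a = 0 then (if d \<noteq> 0 then C * AS ?t * GF d b c ?t else 0)
      else (if d = a then C * GF 0 b c ?t else 0) + (if d = 0 then C * GF a b c ?t else 0)))"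
    unfolding riem_def S pd_christ[OF a b d] pd_christ[OF a b c] GS[OF a c] GS[OF a d] ..
  show ?thesis
  proof (cases "a = 0")
    case True
    then show ?thesis unfolding r using a b c d by (auto simp: GF_def gF_def algebra_simps power2_eq_square)
  next
    case False
    then show ?thesis unfolding r using a b c d by (auto simp: GF_def gF_def algebra_simps power2_eq_square)
  qed
qed


lemma g_diag: "g y a e = (if e = a then gF a a (y 0) else 0)"
  by (simp add: g_eq gF_def)

lemma ginv_diag: "ginv N g y a e = (if e = a then giF a a (y 0) else 0)"
  by (simp add: ginv_eq giF_def)

lemma gg1: "a < N \<Longrightarrow> gF a a t * giF a a t = 1"
  using AS_pos[of t] by (simp add: gF_def giF_def)

lemma ifz_mult: "(if P then x else 0) * (y::real) = (if P then x * y else 0)" by simp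
lemma mult_ifz: "(y::real) * (if P then x else 0) = (if P then y * x else 0)" by simp
lemma sum_ifz: "(\<Sum>i\<in>S. if P then h i else (0::real)) = (if P then (\<Sum>i\<in>S. h i) else 0)" by simp

lemma sum4_delta: "a<N \<Longrightarrow> b<N \<Longrightarrow> p<N \<Longrightarrow> (q::nat)<N \<Longrightarrow> (\<Sum>e<N. \<Sum>f<N. \<Sum>k<N. \<Sum>l<N. if e = a then if f = b then if k = p then if l = q then (V::real) else 0 else 0 else 0 else 0) = V"
  by (simp add: sum_ifz sum.delta)

lemma riem_low_eq:
  assumes a: "a < N" and b: "b < N" and c: "c < N" and d: "d < N"
  shows "riem_low N g a b c d x = C^2 * (gF a c (x 0) * gF b d (x 0) - gF a d (x 0) * gF b c (x 0))"
proof -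
  have "riem_low N g a b c d x = (\<Sum>e<N. if e = a then gF a a (x 0) * riem N g a b c d x else 0)"
    unfolding riem_low_def by (rule sum.cong) (auto simp: g_diag)
  also have "\<dots> = gF a a (x 0) * riem N g a b c d x" using a by (simp add: sum.delta)
  also have "\<dots> = C^2 * (gF a c (x 0) * gF b d (x 0) - gF a d (x 0) * gF b c (x 0))"
    unfolding riem_eq[OF a b c d] by (auto simp: gF_def algebra_simps)
  finally show ?thesis .
qed

lemma riem_ud_eq:
  assumes a: "a < N" and b: "b < N" and c: "c < N" and d: "d < N"
  shows "riem_ud N g a b c d x = C^2 * D2 a b c d"
proof -
  have "riem_ud N g a b c d x = (\<Sum>e<N. \<Sum>f<N. if e = c then (if f = d then riem_low N g a b c d x * giF c c (x 0) * giF d d (x 0) else 0) else 0)"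
    unfolding riem_ud_def by (intro sum.cong refl) (auto simp: ginv_diag)
  also have "\<dots> = riem_low N g a b c d x * giF c c (x 0) * giF d d (x 0)" using c d by (simp add: sum_ifz sum.delta)
  also have "\<dots> = C^2 * D2 a b c d"
    unfolding riem_low_eq[OF a b c d] using a b c d AS_pos[of "x 0"]
    by (auto simp: gF_def giF_def D2_def field_simps)
  finally show ?thesis .
qed


definition "PP k = real (\<Prod>i<2*k. N - 2 - i)"

lemma lovQ_val:
  assumes a: "a < N" and b: "b < N"
  shows "lovQ N g (Suc k) a b c d x = 1/2 * (C^2)^k * PP k * D2 a b c d"
  unfolding PP_def by (rule lovQ_eval[OF riem_ud_eq a b])

lemma lovQ_du_val:
  assumes a: "a < N" and b: "b < N" and p: "p < N" and q: "q < N"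
  shows "lovQ_du N g (Suc k) a b p q x = 1/2 * (C^2)^k * PP k * D2 a b p q"
proof -
  let ?t = "x 0"
  have "lovQ_du N g (Suc k) a b p q x = (\<Sum>e<N. \<Sum>f<N. \<Sum>kk<N. \<Sum>l<N.
      if e = a then if f = b then if kk = p then if l = q then
        gF a a ?t * gF b b ?t * lovQ N g (Suc k) a b p q x * giF p p ?t * giF q q ?t
      else 0 else 0 else 0 else 0)"
    unfolding lovQ_du_def by (intro sum.cong refl) (auto simp: g_diag ginv_diag)
  also have "\<dots> = gF a a ?t * gF b b ?t * lovQ N g (Suc k) a b p q x * giF p p ?t * giF q q ?t"
    by (rule sum4_delta[OF a b p q])
  also have "\<dots> = 1/2 * (C^2)^k * PP k * D2 a b p q"
    unfolding lovQ_val[OF a b]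
  proof -
    let ?Z = "1/2 * (C^2)^k * PP k"
    show "gF a a ?t * gF b b ?t * (?Z * D2 a b p q) * giF p p ?t * giF q q ?t = ?Z * D2 a b p q"
    proof (cases "a = p \<and> b = q")
      case True
      then have "gF a a ?t * gF b b ?t * (?Z * D2 a b p q) * giF p p ?t * giF q q ?t
          = (gF a a ?t * giF a a ?t) * (gF b b ?t * giF b b ?t) * (?Z * D2 a b p q)" by simp
      then show ?thesis using gg1[OF a] gg1[OF b] by simp
    next
      case F1: False
      show ?thesis
      proof (cases "a = q \<and> b = p")
        case True
        then have "gF a a ?t * gF b b ?t * (?Z * D2 a b p q) * giF p p ?t * giF q q ?t
            = (gF a a ?t * giF a a ?t) * (gF b b ?t * giF b b ?t) * (?Z * D2 a b p q)" by simp
        then show ?thesis using gg1[OF a] gg1[OF b] by simp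
      next
        case False
        then have "D2 a b p q = 0" unfolding D2_def if_not_P[OF F1] if_not_P[OF False] by simp
        then show ?thesis by simp
      qed
    qed
  qed
  finally show ?thesis .
qed

lemma sumD2:
  assumes a: "a < N" and b: "b < N"
  shows "(\<Sum>p<N. \<Sum>q<N. D2 a b p q * X p q) = X a b - X b a"
proof -
  have "(\<Sum>p<N. \<Sum>q<N. D2 a b p q * X p q) = (\<Sum>p<N. \<Sum>q<N. (if p = a then if q = b then X a b else 0 else 0)
     - (if p = b then if q = a then X b a else 0 else 0))"
    by (intro sum.cong refl) (auto simp: D2_def)
  also have "\<dots> = X a b - X b a"
    using a b by (simp add: sum_subtractf sum_ifz sum.delta)
  finally show ?thesis .
qed

lemma genRiem_val:
  assumes a: "a < N" and b: "b < N" and c: "c < N" and d: "d < N"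
  shows "genRiem N g (Suc k) a b c d x = (C^2)^Suc k * PP k * (gF a c (x 0) * gF b d (x 0) - gF a d (x 0) * gF b c (x 0))"
proof -
  let ?Z = "1/2 * (C^2)^k * PP k"
  have "genRiem N g (Suc k) a b c d x = (\<Sum>p<N. \<Sum>q<N. D2 a b p q * (?Z * riem_low N g p q c d x))"
    unfolding genRiem_def by (intro sum.cong refl) (auto simp: lovQ_du_val a b)
  also have "\<dots> = ?Z * riem_low N g a b c d x - ?Z * riem_low N g b a c d x"
    by (rule sumD2[OF a b])
  also have "\<dots> = (C^2)^Suc k * PP k * (gF a c (x 0) * gF b d (x 0) - gF a d (x 0) * gF b c (x 0))"
    unfolding riem_low_eq[OF a b c d] riem_low_eq[OF b a c d] by (simp add: algebra_simps)
  finally show ?thesis .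
qed


lemma genRic_val:
  assumes a: "a < N" and b: "b < N"
  shows "genRic N g (Suc k) a b x = (C^2)^Suc k * PP k * (real N - 1) * gF a b (x 0)"
proof -
  let ?t = "x 0" and ?W = "(C^2)^Suc k * PP k"
  have "genRic N g (Suc k) a b x = (\<Sum>c<N. \<Sum>d<N. if d = c then giF c c ?t * genRiem N g (Suc k) c a c b x else 0)"
    unfolding genRic_def by (intro sum.cong refl) (auto simp: ginv_diag)
  also have "\<dots> = (\<Sum>c<N. giF c c ?t * genRiem N g (Suc k) c a c b x)"
    by (intro sum.cong refl) (simp add: sum.delta)
  also have "\<dots> = (\<Sum>c<N. ?W * gF a b ?t - ?W * (if c = b then (if a = b then gF a a ?t else 0) else 0))"
  proof (intro sum.cong refl)
    fix c assume "c \<in> {..<N}"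
    then have c: "c < N" by simp
    have e1: "giF c c ?t * gF c c ?t = 1" using gg1[OF c] by (simp add: mult.commute)
    have e2: "giF c c ?t * (gF c b ?t * gF a c ?t) = (if c = b then (if a = b then gF a a ?t else 0) else 0)"
      using gg1[OF c] by (auto simp: gF_def algebra_simps)
    show "giF c c ?t * genRiem N g (Suc k) c a c b x = ?W * gF a b ?t - ?W * (if c = b then (if a = b then gF a a ?t else 0) else 0)"
      unfolding genRiem_val[OF c a c b] using e1 e2 by (simp add: algebra_simps)
  qed
  also have "\<dots> = real N * (?W * gF a b ?t) - ?W * (if a = b then gF a a ?t else 0)"
    using b by (simp add: sum_subtractf mult_ifz sum.delta)
  also have "\<dots> = ?W * (real N - 1) * gF a b ?t"
    by (auto simp: gF_def algebra_simps)
  finally show ?thesis .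
qed

lemma genScal_val:
  "genScal N g (Suc k) x = (C^2)^Suc k * PP k * (real N - 1) * real N"
proof -
  let ?t = "x 0" and ?W = "(C^2)^Suc k * PP k"
  have "genScal N g (Suc k) x = (\<Sum>a<N. \<Sum>b<N. if b = a then giF a a ?t * genRic N g (Suc k) a b x else 0)"
    unfolding genScal_def by (intro sum.cong refl) (auto simp: ginv_diag)
  also have "\<dots> = (\<Sum>a<N. giF a a ?t * genRic N g (Suc k) a a x)"
    by (intro sum.cong refl) (simp add: sum.delta)
  also have "\<dots> = (\<Sum>a<N. ?W * (real N - 1))"
  proof (intro sum.cong refl)
    fix a assume "a \<in> {..<N}"
    then have a: "a < N" by simp
    have "giF a a ?t * gF a a ?t = 1" using gg1[OF a] by (simp add: mult.commute)
    then show "giF a a ?t * genRic N g (Suc k) a a x = ?W * (real N - 1)"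
      unfolding genRic_val[OF a a] by (simp add: algebra_simps)
  qed
  also have "\<dots> = ?W * (real N - 1) * real N" by simp
  finally show ?thesis .
qed

lemma lovH_mixed_val:
  assumes a: "a < N" and b: "b < N"
  shows "lovH_mixed N g (Suc k) a b x = (C^2)^Suc k * PP k * (real N - 1) * (real (Suc k) - real N / 2) * (if a = b then 1 else 0)"
proof -
  let ?t = "x 0" and ?W = "(C^2)^Suc k * PP k"
  have lh: "lovH N g (Suc k) c b x = ?W * (real N - 1) * (real (Suc k) - real N / 2) * gF c b ?t" if c: "c < N" for c
    unfolding lovH_def genRic_val[OF c b] genScal_val g_eq by (simp add: field_simps)
  have "lovH_mixed N g (Suc k) a b x = (\<Sum>c<N. if c = a then giF a a ?t * lovH N g (Suc k) c b x else 0)"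
    unfolding lovH_mixed_def by (intro sum.cong refl) (auto simp: ginv_diag)
  also have "\<dots> = giF a a ?t * lovH N g (Suc k) a b x" using a by (simp add: sum.delta)
  also have "\<dots> = ?W * (real N - 1) * (real (Suc k) - real N / 2) * (giF a a ?t * gF a b ?t)"
    unfolding lh[OF a] by (simp add: algebra_simps)
  also have "giF a a ?t * gF a b ?t = (if a = b then 1 else 0)"
    using gg1[OF a] by (auto simp: gF_def mult.commute)
  finally show ?thesis by simp
qed

end

lemma prod_fact_choose: "(\<Prod>j<q. n - j) = fact q * (n choose q)" for n q :: nat
proof (induction q)
  case 0 then show ?case by simp
next
  case (Suc q)
  have "(\<Prod>j<Suc q. n - j) = (\<Prod>j<q. n - j) * (n - q)" by simp
  also have "\<dots> = fact q * ((n - q) * (n choose q))" using Suc by simp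
  also have "(n - q) * (n choose q) = Suc q * (n choose Suc q)"
    using binomial_absorb_comp[of n q] binomial_absorption[of q n] by simp
  finally show ?case by (simp add: algebra_simps)
qed

lemma k21_id:
  assumes "2 \<le> i" "2*i+1 \<le> N"
  shows "real (\<Prod>j<2*(i-1). N - 2 - j) * (real N - 1) * (real i - real N / 2) = k21 N i"
proof -
  let ?q = "2*(i-1)" and ?n = "N - 2"
  have p: "(\<Prod>j<?q. N - 2 - j) = fact ?q * (?n choose ?q)" by (rule prod_fact_choose)
  have ac: "(?n - ?q) * (?n choose ?q) = ?n * ((?n - 1) choose ?q)" by (rule binomial_absorb_comp)
  have nq: "real (?n - ?q) = real N - 2 * real i" using assms by (simp add: of_nat_diff)
  have n: "real ?n = real N - 2" using assms by (simp add: of_nat_diff)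
  have n1: "?n - 1 = N - 3" by simp
  have acr: "(real N - 2 * real i) * real (?n choose ?q) = (real N - 2) * real ((N - 3) choose ?q)"
    using arg_cong[OF ac, of real] unfolding of_nat_mult nq n n1 .
  have "real (\<Prod>j<?q. N - 2 - j) * (real N - 1) * (real i - real N / 2)
      = - (1/2) * fact ?q * (real N - 1) * ((real N - 2 * real i) * real (?n choose ?q))"
  proof -
    have r: "real (\<Prod>j<?q. N - 2 - j) = fact ?q * real (?n choose ?q)" unfolding p by simp
    have gen: "\<And>F B::real. (F*B)*(real N - 1)*(real i - real N/2) = -(1/2)*F*(real N - 1)*((real N - 2*real i)*B)"
      by (simp add: field_simps)
    show ?thesis unfolding r by (rule gen)
  qed
  also have "\<dots> = k21 N i"
  proof -
    have gen2: "\<And>F B::real. -(1/2)*F*(real N - 1)*((real N - 2)*B) = -(1/2)*F*(real N - 1)*(real N - 2)*B"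
      by (simp only: mult.assoc)
    show ?thesis unfolding acr k21_def by (rule gen2)
  qed
  finally show ?thesis .
qed

theorem theorem1:
  fixes n N :: nat and \<alpha> :: "nat \<Rightarrow> real" and C a0 :: real
  assumes "n \<ge> 2" and "N \<ge> 2*n+1"
    and root: "(1/2) * (real N - 2) * (real N - 1) * C\<^sup>2
               - (\<Sum>i=2..n. \<alpha> i * k21 N i * C ^ (2*i)) = 0"
    and "a0 > 0"
  shows "\<forall>x a b. a < N \<longrightarrow> b < N \<longrightarrow>
           lovH_mixed N (frw N (\<lambda>t. a0 * exp (C * t))) 1 a b x
           + (\<Sum>i=2..n. \<alpha> i * lovH_mixed N (frw N (\<lambda>t. a0 * exp (C * t))) i a b x) = 0"
proof (intro allI impI)
  fix x a b assume a: "a < N" and b: "b < N"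
  let ?G = "frw N (\<lambda>t. a0 * exp (C * t))"
  let ?d = "(if a = b then 1 else 0) :: real"
  have H1: "lovH_mixed N ?G 1 a b x = - (1/2) * (real N - 2) * (real N - 1) * C\<^sup>2 * ?d"
    using lovH_mixed_val[OF \<open>a0 > 0\<close> a b, where k=0 and C=C and x=x]
    by (simp add: PP_def[OF \<open>a0 > 0\<close>] field_simps power2_eq_square)
  have Hi: "lovH_mixed N ?G i a b x = k21 N i * C ^ (2*i) * ?d" if i: "i \<in> {2..n}" for i
  proof -
    have i2: "2 \<le> i" and iN: "2*i+1 \<le> N" using i assms by auto
    have si: "Suc (i-1) = i" using i2 by simp
    have "lovH_mixed N ?G i a b x = (C^2)^Suc (i-1) * PP N (i-1) * (real N - 1) * (real (Suc (i-1)) - real N / 2) * ?d"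
      using lovH_mixed_val[OF \<open>a0 > 0\<close> a b, where k="i-1" and C=C and x=x] si by simp
    also have "\<dots> = (PP N (i-1) * (real N - 1) * (real i - real N / 2)) * C^(2*i) * ?d"
      unfolding si power_mult[symmetric] by (simp add: algebra_simps)
    also have "PP N (i-1) * (real N - 1) * (real i - real N / 2) = k21 N i"
      unfolding PP_def[OF \<open>a0 > 0\<close>] by (rule k21_id[OF i2 iN])
    finally show ?thesis .
  qed
  have "lovH_mixed N ?G 1 a b x + (\<Sum>i=2..n. \<alpha> i * lovH_mixed N ?G i a b x)
      = - (1/2) * (real N - 2) * (real N - 1) * C\<^sup>2 * ?d + (\<Sum>i=2..n. \<alpha> i * (k21 N i * C ^ (2*i) * ?d))"
    unfolding H1 by (simp add: Hi)
  also have "\<dots> = - ((1/2) * (real N - 2) * (real N - 1) * C\<^sup>2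
               - (\<Sum>i=2..n. \<alpha> i * k21 N i * C ^ (2*i))) * ?d"
    by (simp add: algebra_simps sum_distrib_left sum_distrib_right sum_subtractf)
  also have "\<dots> = 0" using root by simp
  finally show "lovH_mixed N ?G 1 a b x + (\<Sum>i=2..n. \<alpha> i * lovH_mixed N ?G i a b x) = 0" .
qed

end
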